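(* Let $A\in\mathbf L(\mathfrak H)$ be a normal contraction and let $\Sigma=\{T;\mathfrak D_{A^*},\mathfrak D_A,\mathfrak H\}$ be the system with $T=\begin{pmatrix}-A^*&D_A\\ D_{A^*}&A\end{pmatrix}:\mathfrak D_{A^*}\oplus\mathfrak H\to\mathfrak D_A\oplus\mathfrak H$. Then its controllable and observable subspaces coincide, $\mathfrak H^c_\Sigma=\mathfrak H^o_\Sigma$, where $\mathfrak H^c_\Sigma=\overline{\rm span}\{A^nD_{A^*}\mathfrak D_{A^*}:n\ge0\}$ and $\mathfrak H^o_\Sigma=\overline{\rm span}\{A^{*n}D_A\mathfrak D_A:n\ge0\}$, and the following are equivalent: (i) $\Sigma$ is simple; (ii) $\Sigma$ is controllable; (iii) $\Sigma$ is observable; (iv) $\Sigma$ is minimal.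
   Context: A system $\tau=\{T;\mathfrak M,\mathfrak N,\mathfrak H\}$ consists of Hilbert spaces $\mathfrak M$ (input), $\mathfrak N$ (output), $\mathfrak H$ (state) and a bounded operator $T=\begin{pmatrix}D&C\\ B&A\end{pmatrix}:\mathfrak M\oplus\mathfrak H\to\mathfrak N\oplus\mathfrak H$. Its controllable and observable subspaces are $\mathfrak H^c=\overline{\rm span}\{A^nB\mathfrak M:n\ge0\}$, $\mathfrak H^o=\overline{\rm span}\{A^{*n}C^*\mathfrak N:n\ge0\}$; $\tau$ is controllable if $\mathfrak H^c=\mathfrak H$, observable if $\mathfrak H^o=\mathfrak H$, minimal if both, simple if $\mathfrak H=\overline{\mathfrak H^c+\mathfrak H^o}$. $D_A=(I-A^*A)^{1/2}$, $\mathfrak D_A=\overline{\rm ran}\,D_A$. *)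

theory Defs
  imports "HOL-Analysis.Analysis"
begin

definition contraction_op :: "('h::{real_inner,complete_space} \<Rightarrow> 'h) \<Rightarrow> bool" where
  "contraction_op A \<longleftrightarrow> bounded_linear A \<and> (\<forall>x. norm (A x) \<le> norm x)"

definition normal_op :: "('h::{real_inner,complete_space} \<Rightarrow> 'h) \<Rightarrow> bool" where
  "normal_op A \<longleftrightarrow> bounded_linear A \<and> adjoint A \<circ> A = A \<circ> adjoint A"

definition nonneg_op :: "('h::{real_inner,complete_space} \<Rightarrow> 'h) \<Rightarrow> bool" where
  "nonneg_op S \<longleftrightarrow> bounded_linear S \<and> adjoint S = S \<and> (\<forall>x. 0 \<le> S x \<bullet> x)"

definition op_sqrt :: "('h::{real_inner,complete_space} \<Rightarrow> 'h) \<Rightarrow> ('h \<Rightarrow> 'h)" where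
  "op_sqrt P = (THE S. nonneg_op S \<and> S \<circ> S = P)"

definition defect_op :: "('h::{real_inner,complete_space} \<Rightarrow> 'h) \<Rightarrow> ('h \<Rightarrow> 'h)" where
  "defect_op A = op_sqrt (\<lambda>x. x - adjoint A (A x))"

definition defect_space :: "('h::{real_inner,complete_space} \<Rightarrow> 'h) \<Rightarrow> 'h set" where
  "defect_space A = closure (range (defect_op A))"

text \<open>A system with state space 'h, main operator A, input operator B restricted to the
  input space M, output operator C considered on 'h with values in the output space N
  (a closed subspace of 'h containing ran C); C* : N \<rightarrow> 'h is the restriction of adjoint C.\<close>

definition controllable_subspace ::
  "('h::{real_inner,complete_space} \<Rightarrow> 'h) \<Rightarrow> ('m \<Rightarrow> 'h) \<Rightarrow> 'm set \<Rightarrow> 'h set" where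
  "controllable_subspace A B M = closure (span (\<Union>n. (A ^^ n) ` (B ` M)))"

definition observable_subspace ::
  "('h::{real_inner,complete_space} \<Rightarrow> 'h) \<Rightarrow> ('h \<Rightarrow> 'h) \<Rightarrow> 'h set \<Rightarrow> 'h set" where
  "observable_subspace A C N = closure (span (\<Union>n. (adjoint A ^^ n) ` (adjoint C ` N)))"

definition sys_controllable where
  "sys_controllable A B M \<longleftrightarrow> controllable_subspace A B M = UNIV"

definition sys_observable where
  "sys_observable A C N \<longleftrightarrow> observable_subspace A C N = UNIV"

definition sys_minimal where
  "sys_minimal A B M C N \<longleftrightarrow> sys_controllable A B M \<and> sys_observable A C N"

definition sys_simple where
  "sys_simple A B M C N \<longleftrightarrow>
     closure {x + y | x y. x \<in> controllable_subspace A B M \<and> y \<in> observable_subspace A C N} = UNIV"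

end

theory Submission
  imports Defs "HOL-Computational_Algebra.Formal_Power_Series"
begin

lemma summable_Cauchy_cs: "summable f \<longleftrightarrow> (\<forall>e>0. \<exists>N. \<forall>m\<ge>N. \<forall>n. norm (sum f {m..<n}) < e)" (is "_ = ?rhs")
  for f :: "nat \<Rightarrow> 'a::{real_normed_vector,complete_space}"
proof
  assume f: "summable f"
  show ?rhs
  proof clarify
    fix e :: real
    assume "0 < e"
    then obtain M where M: "\<And>m n. \<lbrakk>m\<ge>M; n\<ge>M\<rbrakk> \<Longrightarrow> norm (sum f {..<m} - sum f {..<n}) < e"
      using f by (force simp add: summable_iff_convergent Cauchy_convergent_iff [symmetric] Cauchy_iff)
    have "norm (sum f {m..<n}) < e" if "m \<ge> M" for m n
    proof (cases m n rule: linorder_class.le_cases)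
      assume "m \<le> n"
      then show ?thesis
        by (metis (mono_tags, opaque_lifting) M atLeast0LessThan order_trans sum_diff_nat_ivl that zero_le)
    next
      assume "n \<le> m"
      then show ?thesis
        by (simp add: \<open>0 < e\<close>)
    qed
    then show "\<exists>N. \<forall>m\<ge>N. \<forall>n. norm (sum f {m..<n}) < e"
      by blast
  qed
next
  assume r: ?rhs
  then show "summable f"
    unfolding summable_iff_convergent Cauchy_convergent_iff [symmetric] Cauchy_iff
  proof clarify
    fix e :: real
    assume "0 < e"
    with r obtain N where N: "\<And>m n. m \<ge> N \<Longrightarrow> norm (sum f {m..<n}) < e"
      by blast
    have "norm (sum f {..<m} - sum f {..<n}) < e" if "m\<ge>N" "n\<ge>N" for m n
    proof (cases m n rule: linorder_class.le_cases)
      assume "m \<le> n"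
      then show ?thesis
        by (metis N finite_lessThan lessThan_minus_lessThan lessThan_subset_iff norm_minus_commute sum_diff \<open>m\<ge>N\<close>)
    next
      assume "n \<le> m"
      then show ?thesis
        by (metis N finite_lessThan lessThan_minus_lessThan lessThan_subset_iff sum_diff \<open>n\<ge>N\<close>)
    qed
    then show "\<exists>M. \<forall>m\<ge>M. \<forall>n\<ge>M. norm (sum f {..<m} - sum f {..<n}) < e"
      by blast
  qed
qed

lemma summable_norm_cancel_cs:
  fixes f :: "nat \<Rightarrow> 'a::{real_normed_vector,complete_space}"
  shows "summable (\<lambda>n. norm (f n)) \<Longrightarrow> summable f"
  unfolding summable_Cauchy_cs summable_Cauchy
  apply (erule all_forward imp_forward ex_forward | assumption)+
  apply (fastforce simp add: order_le_less_trans [OF norm_sum] order_le_less_trans [OF abs_ge_self])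
  done

lemma summable_norm_cs:
  fixes f :: "nat \<Rightarrow> 'a::{real_normed_vector,complete_space}"
  shows "summable (\<lambda>n. norm (f n)) \<Longrightarrow> norm (suminf f) \<le> (\<Sum>n. norm (f n))"
proof -
  assume a: "summable (\<lambda>n. norm (f n))"
  have "(\<lambda>n. norm (sum f {..<n})) \<longlonglongrightarrow> norm (suminf f)"
    by (intro tendsto_norm summable_LIMSEQ summable_norm_cancel_cs[OF a])
  moreover have "(\<lambda>n. \<Sum>i<n. norm (f i)) \<longlonglongrightarrow> (\<Sum>n. norm (f n))"
    by (rule summable_LIMSEQ[OF a])
  ultimately show ?thesis
    by (rule LIMSEQ_le) (use norm_sum in blast)
qed

lemma summable_comparison_cs:
  fixes f :: "nat \<Rightarrow> 'a::{real_normed_vector,complete_space}"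
  assumes "\<And>n. norm (f n) \<le> g n" "summable g"
  shows "summable f" "summable (\<lambda>n. norm (f n))"
proof -
  show "summable (\<lambda>n. norm (f n))"
    by (rule summable_comparison_test'[OF assms(2)]) (use assms(1) in auto)
  then show "summable f" by (rule summable_norm_cancel_cs)
qed

lemma quad_zero:
  fixes q c :: real
  assumes "\<And>t. 0 \<le> t*t*q - 2*t*c" "0 \<le> q"
  shows "c = 0"
proof -
  define t where "t = c/(q+1)"
  have qp: "q + 1 > 0" using assms(2) by simp
  have h0: "0 \<le> t*t*q - 2*t*c" by (rule assms(1))
  have tc: "t*(q+1) = c" unfolding t_def using qp by simp
  have "(t*t*q - 2*t*c) * ((q+1)*(q+1)) = (t*(q+1))*(t*(q+1))*q - 2*(t*(q+1))*c*(q+1)"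
    by (simp add: algebra_simps)
  also have "\<dots> = c*c*q - 2*c*c*(q+1)" by (simp add: tc)
  finally have e: "(t*t*q - 2*t*c) * ((q+1)*(q+1)) = c*c*q - 2*c*c*(q+1)" .
  have "0 \<le> (t*t*q - 2*t*c) * ((q+1)*(q+1))" using h0 qp by simp
  hence "c*c*(q+2) \<le> 0" unfolding e by (simp add: algebra_simps)
  moreover have "c*c*(q+2) \<ge> 0" using assms(2) by simp
  ultimately have "c*c*(q+2) = 0" by linarith
  thus ?thesis using assms(2) by simp
qed

lemma parallelogram_h:
  fixes a b :: "'a::real_inner"
  shows "norm (a - b)^2 + norm (a + b)^2 = 2 * norm a ^2 + 2 * norm b ^ 2"
  by (simp add: power2_norm_eq_inner inner_simps inner_commute)

lemma proj_exists:
  fixes z :: "'h::{real_inner,complete_space}" and V :: "'h set"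
  assumes sV: "subspace V" and cV: "closed V"
  shows "\<exists>p\<in>V. \<forall>v\<in>V. (z - p) \<bullet> v = 0"
proof -
  define d where "d = Inf ((\<lambda>v. norm (z - v)) ` V)"
  have V0: "0 \<in> V" using sV by (simp add: subspace_0)
  have bdd: "bdd_below ((\<lambda>v. norm (z - v)) ` V)"
    by (rule bdd_belowI[of _ 0]) auto
  have dle: "d \<le> norm (z - v)" if "v \<in> V" for v
    unfolding d_def by (rule cInf_lower) (use that bdd in auto)
  have d0: "0 \<le> d" unfolding d_def
    by (rule cInf_greatest) (use V0 in auto)
  have "\<exists>v\<in>V. norm (z - v)^2 < d^2 + 1/(Suc n)" for n :: nat
  proof -
    have "d < sqrt (d^2 + 1/(Suc n))"
      using d0 by (simp add: real_less_rsqrt)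
    then obtain v where v: "v \<in> V" "norm (z - v) < sqrt (d^2 + 1/(Suc n))"
      unfolding d_def using V0 by (subst (asm) cInf_less_iff) (auto simp: bdd)
    hence "norm (z - v)^2 < d^2 + 1/(Suc n)"
      by (metis norm_ge_zero real_sqrt_less_iff real_sqrt_pow2_iff
          real_sqrt_unique power2_eq_square real_sqrt_ge_zero order_le_less_trans
          real_less_rsqrt not_less real_sqrt_le_mono power2_less_imp_less sqrt_le_D abs_of_nonneg)
    with v show ?thesis by blast
  qed
  then obtain s where sV': "\<And>n. s n \<in> V" and sd: "\<And>n. norm (z - s n)^2 < d^2 + 1/(Suc n)"
    by metis
  have key: "norm (s m - s n)^2 \<le> 2/(Suc m) + 2/(Suc n)" for m n
  proof -
    have mid: "(1/2) *\<^sub>R (s m + s n) \<in> V"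
      using sV sV' by (simp add: subspace_add subspace_scale)
    have "d^2 \<le> norm (z - (1/2) *\<^sub>R (s m + s n))^2"
      using dle[OF mid] d0 by (simp add: power_mono)
    also have "norm (z - (1/2) *\<^sub>R (s m + s n)) = norm ((z - s m) + (z - s n)) / 2"
    proof -
      have zz: "(1/2) *\<^sub>R (z + z) = z"
        by (metis scaleR_2 scaleR_one scaleR_scaleR divide_self_if nonzero_mult_div_cancel_left
              zero_neq_numeral times_divide_eq_left mult.commute)
      have "(1/2) *\<^sub>R ((z - s m) + (z - s n)) = (1/2) *\<^sub>R (z + z) - (1/2) *\<^sub>R (s m + s n)"
        by (simp add: algebra_simps)
      hence "z - (1/2) *\<^sub>R (s m + s n) = (1/2) *\<^sub>R ((z - s m) + (z - s n))"
        using zz by simp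
      thus ?thesis by simp
    qed
    finally have h1: "4 * d^2 \<le> norm ((z - s m) + (z - s n))^2"
      by (simp add: power_divide)
    have "norm ((z - s n) - (z - s m))^2 + norm ((z - s n) + (z - s m))^2
          = 2 * norm (z - s n)^2 + 2 * norm (z - s m)^2"
      by (rule parallelogram_h)
    moreover have "(z - s n) - (z - s m) = s m - s n" by simp
    moreover have "(z - s n) + (z - s m) = (z - s m) + (z - s n)" by simp
    ultimately have "norm (s m - s n)^2 = 2 * norm (z - s n)^2 + 2 * norm (z - s m)^2
         - norm ((z - s m) + (z - s n))^2" by simp
    with h1 sd[of m] sd[of n] show ?thesis by simp
  qed
  have "Cauchy s"
  proof (rule metric_CauchyI)
    fix e :: real assume e: "e > 0"
    obtain N :: nat where N: "4 / e^2 < N" using reals_Archimedean2 by blast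
    have "dist (s m) (s n) < e" if "m \<ge> N" "n \<ge> N" for m n
    proof -
      have Npos: "(0::real) < N" using N e by (smt (verit) divide_pos_pos zero_less_power)
      have "2/(Suc m) \<le> 2 / N" using that Npos by (simp add: frac_le)
      moreover have "2/(Suc n) \<le> 2 / N" using that Npos by (simp add: frac_le)
      ultimately have "norm (s m - s n)^2 \<le> 4 / N" using key[of m n] by simp
      also have "4 / N < e^2" using N e Npos by (simp add: field_simps)
      finally have "norm (s m - s n)^2 < e^2" .
      thus ?thesis using e by (simp add: dist_norm power_less_imp_less_base)
    qed
    thus "\<exists>M. \<forall>m\<ge>M. \<forall>n\<ge>M. dist (s m) (s n) < e" by blast
  qed
  then obtain p where sp: "s \<longlonglongrightarrow> p" using Cauchy_convergent_iff convergent_def by blast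
  have pV: "p \<in> V" using cV sV' sp closed_sequentially by blast
  have lim1: "(\<lambda>n. norm (z - s n)^2) \<longlonglongrightarrow> norm (z - p)^2"
    by (intro tendsto_intros sp)
  have lim2: "(\<lambda>n. d^2 + 1/real (Suc n)) \<longlonglongrightarrow> d^2 + 0"
    by (intro tendsto_intros LIMSEQ_inverse_real_of_nat[unfolded inverse_eq_divide])
  have pmin: "norm (z - p)^2 \<le> d^2"
    using LIMSEQ_le[OF lim1 lim2] sd less_imp_le by auto
  have ortho: "(z - p) \<bullet> v = 0" if vV: "v \<in> V" for v
  proof (rule quad_zero[where q = "norm v ^2"])
    fix t :: real
    have "p + t *\<^sub>R v \<in> V" using sV pV vV by (simp add: subspace_add subspace_scale)
    hence "d \<le> norm (z - (p + t *\<^sub>R v))" by (rule dle)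
    hence "d^2 \<le> norm (z - (p + t *\<^sub>R v))^2" using d0 by (simp add: power_mono)
    also have "norm (z - (p + t *\<^sub>R v))^2 = norm (z - p)^2 + t*t*norm v^2 - 2*t*((z-p) \<bullet> v)"
      unfolding power2_norm_eq_inner by (simp add: inner_simps inner_commute algebra_simps)
    finally show "0 \<le> t*t*norm v^2 - 2*t*((z-p) \<bullet> v)" using pmin by simp
  qed simp
  show ?thesis using pV ortho by blast
qed

lemma inner_eq_vec:
  fixes a b :: "'a::real_inner"
  assumes "\<And>z. z \<bullet> a = z \<bullet> b" shows "a = b"
proof -
  have "(a - b) \<bullet> (a - b) = 0" using assms[of "a-b"] by (simp add: inner_diff_right)
  thus ?thesis by simp
qed

lemma subspace_closure_h:
  fixes S :: "'a::real_normed_vector set"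
  assumes "subspace S" shows "subspace (closure S)"
  unfolding subspace_def
proof (intro conjI ballI allI)
  show "0 \<in> closure S" using assms closure_subset subspace_0 by blast
next
  fix x y assume x: "x \<in> closure S" and y: "y \<in> closure S"
  from x obtain a where a: "\<And>n. a n \<in> S" "a \<longlonglongrightarrow> x" unfolding closure_sequential by blast
  from y obtain b where b: "\<And>n. b n \<in> S" "b \<longlonglongrightarrow> y" unfolding closure_sequential by blast
  have "\<forall>n. a n + b n \<in> S" using a b assms subspace_add by blast
  moreover have "(\<lambda>n. a n + b n) \<longlonglongrightarrow> x + y" using a b by (intro tendsto_intros)
  ultimately show "x + y \<in> closure S" unfolding closure_sequential by (intro exI[of _ "\<lambda>n. a n + b n"]) blast
next
  fix c :: real and x assume x: "x \<in> closure S"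
  from x obtain a where a: "\<And>n. a n \<in> S" "a \<longlonglongrightarrow> x" unfolding closure_sequential by blast
  have "\<forall>n. c *\<^sub>R a n \<in> S" using a assms subspace_scale by blast
  moreover have "(\<lambda>n. c *\<^sub>R a n) \<longlonglongrightarrow> c *\<^sub>R x" using a by (intro tendsto_intros)
  ultimately show "c *\<^sub>R x \<in> closure S" unfolding closure_sequential by (intro exI[of _ "\<lambda>n. c *\<^sub>R a n"]) blast
qed

lemma riesz_h:
  fixes \<phi> :: "'h::{real_inner,complete_space} \<Rightarrow> real"
  assumes bl: "bounded_linear \<phi>"
  shows "\<exists>w. \<forall>x. \<phi> x = x \<bullet> w"
proof (cases "\<forall>x. \<phi> x = 0")
  case True then show ?thesis by (intro exI[of _ 0]) simp
next
  case False
  then obtain z where z: "\<phi> z \<noteq> 0" by blast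
  interpret bounded_linear \<phi> by (rule bl)
  let ?K = "{x. \<phi> x = 0}"
  have sK: "subspace ?K" unfolding subspace_def by (simp add: add scaleR)
  have cK: "closed ?K"
    by (rule closed_Collect_eq) (auto intro: linear_continuous_on bl)
  obtain p where p: "p \<in> ?K" "\<And>v. v \<in> ?K \<Longrightarrow> (z - p) \<bullet> v = 0"
    using proj_exists[OF sK cK, of z] by blast
  define u where "u = z - p"
  have pu: "\<phi> u = \<phi> z" using p(1) unfolding u_def by (simp add: diff)
  hence u0: "u \<noteq> 0" using z by auto
  have uu: "u \<bullet> u \<noteq> 0" using u0 by simp
  have "\<phi> x = x \<bullet> ((\<phi> u / (u \<bullet> u)) *\<^sub>R u)" for x
  proof -
    let ?y = "x - (\<phi> x / \<phi> u) *\<^sub>R u"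
    have "\<phi> ?y = 0" using pu z by (simp add: diff scaleR)
    hence "u \<bullet> ?y = 0" using p(2)[of ?y] unfolding u_def by simp
    hence "u \<bullet> x = (\<phi> x / \<phi> u) * (u \<bullet> u)" by (simp add: inner_diff_right)
    hence "\<phi> x = (\<phi> u / (u \<bullet> u)) * (u \<bullet> x)" using uu pu z by (simp add: field_simps)
    thus ?thesis by (simp add: inner_commute)
  qed
  thus ?thesis by blast
qed

lemma adjoint_works_h:
  fixes f :: "'h::{real_inner,complete_space} \<Rightarrow> 'h"
  assumes bl: "bounded_linear f"
  shows "f x \<bullet> y = x \<bullet> adjoint f y"
proof -
  have "\<forall>y. \<exists>w. \<forall>x. f x \<bullet> y = x \<bullet> w"
  proof
    fix y
    have "bounded_linear (\<lambda>x. f x \<bullet> y)"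
      using bounded_linear_compose[OF bounded_linear_inner_left bl] by simp
    thus "\<exists>w. \<forall>x. f x \<bullet> y = x \<bullet> w" by (rule riesz_h)
  qed
  then obtain g where "\<forall>y x. f x \<bullet> y = x \<bullet> g y" by metis
  hence "\<exists>g. \<forall>x y. f x \<bullet> y = x \<bullet> g y" by blast
  hence "\<forall>x y. f x \<bullet> y = x \<bullet> adjoint f y"
    unfolding adjoint_def by (rule someI_ex)
  thus ?thesis by blast
qed

lemma adjoint_adjoint_h:
  fixes f :: "'h::{real_inner,complete_space} \<Rightarrow> 'h"
  assumes bl: "bounded_linear f"
  shows "adjoint (adjoint f) = f"
  by (rule adjoint_unique) (metis adjoint_works_h[OF bl] inner_commute)

lemma adjoint_bl_h:
  fixes f :: "'h::{real_inner,complete_space} \<Rightarrow> 'h"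
  assumes bl: "bounded_linear f"
  shows "bounded_linear (adjoint f)"
proof -
  interpret bounded_linear f by (rule bl)
  obtain K where K: "K > 0" "\<And>x. norm (f x) \<le> norm x * K" using pos_bounded by blast
  have add': "adjoint f (x + y) = adjoint f x + adjoint f y" for x y
    by (rule inner_eq_vec) (simp add: adjoint_works_h[OF bl, symmetric] inner_add_right)
  have sc': "adjoint f (c *\<^sub>R x) = c *\<^sub>R adjoint f x" for c x
    by (rule inner_eq_vec) (simp add: adjoint_works_h[OF bl, symmetric])
  have bd: "norm (adjoint f y) \<le> norm y * K" for y
  proof (cases "adjoint f y = 0")
    case True thus ?thesis using K by simp
  next
    case False
    have "norm (adjoint f y)^2 = f (adjoint f y) \<bullet> y"
      by (simp add: adjoint_works_h[OF bl] power2_norm_eq_inner)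
    also have "\<dots> \<le> norm (f (adjoint f y)) * norm y" by (rule norm_cauchy_schwarz)
    also have "\<dots> \<le> norm (adjoint f y) * K * norm y" using K by (simp add: mult_right_mono)
    finally have "norm (adjoint f y) * norm (adjoint f y) \<le> norm (adjoint f y) * (norm y * K)"
      by (simp add: power2_eq_square algebra_simps)
    thus ?thesis using False by simp
  qed
  show ?thesis by (rule bounded_linear_intro[of _ K]) (auto simp: add' sc' bd)
qed

lemma perp_closure_span:
  fixes G :: "'a::real_inner set"
  assumes "\<forall>g\<in>G. g \<bullet> y = 0" "x \<in> closure (span G)"
  shows "x \<bullet> y = 0"
proof -
  have sub: "span G \<subseteq> {x. x \<bullet> y = 0}"
  proof (rule span_minimal)
    show "G \<subseteq> {x. x \<bullet> y = 0}" using assms(1) by auto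
    show "subspace {x. x \<bullet> y = 0}" unfolding subspace_def by (simp add: inner_add_left)
  qed
  have "closed {x. x \<bullet> y = 0}"
    by (intro closed_Collect_eq continuous_intros)
  hence "closure (span G) \<subseteq> {x. x \<bullet> y = 0}" using sub closure_minimal by blast
  thus ?thesis using assms(2) by blast
qed

lemma closure_span_perp_char:
  fixes G :: "'h::{real_inner,complete_space} set"
  shows "x \<in> closure (span G) \<longleftrightarrow> (\<forall>y. (\<forall>g\<in>G. g \<bullet> y = 0) \<longrightarrow> x \<bullet> y = 0)"
proof
  assume "x \<in> closure (span G)" thus "\<forall>y. (\<forall>g\<in>G. g \<bullet> y = 0) \<longrightarrow> x \<bullet> y = 0"
    using perp_closure_span by blast
next
  assume H: "\<forall>y. (\<forall>g\<in>G. g \<bullet> y = 0) \<longrightarrow> x \<bullet> y = 0"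
  let ?X = "closure (span G)"
  have sX: "subspace ?X" by (intro subspace_closure_h subspace_span)
  obtain p where p: "p \<in> ?X" "\<And>v. v \<in> ?X \<Longrightarrow> (x - p) \<bullet> v = 0"
    using proj_exists[OF sX closed_closure, of x] by blast
  have "\<forall>g\<in>G. g \<bullet> (x - p) = 0"
  proof
    fix g assume "g \<in> G"
    hence "g \<in> ?X" using closure_subset span_superset by blast
    thus "g \<bullet> (x - p) = 0" using p(2) by (simp add: inner_commute)
  qed
  hence "x \<bullet> (x - p) = 0" using H by blast
  moreover have "p \<bullet> (x - p) = 0" using p by (simp add: inner_commute)
  ultimately have "(x - p) \<bullet> (x - p) = 0" by (simp add: inner_diff_left)
  hence "x = p" by simp
  thus "x \<in> ?X" using p by simp
qed

definition sc :: "nat \<Rightarrow> real" where "sc k = (-1)^k * ((1/2) gchoose k)"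

lemma gch_step: "((r::real) gchoose Suc k) * (real k + 1) = (r gchoose k) * (r - real k)"
proof -
  have "(r gchoose Suc k) * fact (Suc k) = (\<Prod>i = 0..<Suc k. r - of_nat i)"
    by (rule gbinomial_mult_fact')
  also have "\<dots> = (\<Prod>i = 0..<k. r - of_nat i) * (r - real k)" by simp
  also have "\<dots> = (r gchoose k) * fact k * (r - real k)" by (simp add: gbinomial_mult_fact')
  finally have "(r gchoose Suc k) * (real k + 1) * fact k = (r gchoose k) * (r - real k) * fact k"
    by (simp add: algebra_simps)
  thus ?thesis by simp
qed

lemma sc_0 [simp]: "sc 0 = 1" by (simp add: sc_def)

lemma sc_Suc: "sc (Suc k) = sc k * (real k - 1/2) / (real k + 1)"
proof -
  have e: "((1/2::real) gchoose Suc k) * (real k + 1) = ((1/2) gchoose k) * (1/2 - real k)"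
    by (rule gch_step)
  have "sc (Suc k) * (real k + 1) = - ((-1)^k * (((1/2::real) gchoose Suc k) * (real k + 1)))"
    by (simp add: sc_def)
  also have "\<dots> = - ((-1)^k * (((1/2) gchoose k) * (1/2 - real k)))" by (simp only: e)
  also have "\<dots> = sc k * (real k - 1/2)" by (simp add: sc_def algebra_simps)
  finally have "sc (Suc k) * (real k + 1) = sc k * (real k - 1/2)" .
  thus ?thesis by (simp add: field_simps)
qed

lemma sc_neg: "k \<ge> 1 \<Longrightarrow> sc k < 0"
proof (induction k rule: nat_induct_at_least)
  case base then show ?case using sc_Suc[of 0] by simp
next
  case (Suc n)
  have "real n - 1/2 > 0" using Suc.hyps by simp
  hence "sc n * (real n - 1/2) < 0" using Suc.IH by (simp add: mult_neg_pos)
  thus ?case by (simp add: sc_Suc divide_neg_pos)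
qed

lemma sc_partial: "(\<Sum>k\<le>n. sc k) > 0"
proof -
  define q where "q n = (-1)^n * ((-1/2::real) gchoose n)" for n
  have "(\<Sum>k\<le>n. sc k) = q n"
    unfolding sc_def q_def using gbinomial_sum_lower_neg[of "1/2::real" n]
    by (simp add: mult.commute)
  moreover have "q n > 0"
  proof (induction n)
    case 0 then show ?case by (simp add: q_def)
  next
    case (Suc n)
    have e: "((-1/2::real) gchoose Suc n) * (real n + 1) = ((-1/2) gchoose n) * (-1/2 - real n)"
      by (rule gch_step)
    have "q (Suc n) * (real n + 1) = - ((-1)^n * (((-1/2::real) gchoose Suc n) * (real n + 1)))"
      by (simp add: q_def)
    also have "\<dots> = - ((-1)^n * (((-1/2) gchoose n) * (-1/2 - real n)))" by (simp only: e)
    also have "\<dots> = q n * (real n + 1/2)" by (simp add: q_def algebra_simps)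
    finally have "q (Suc n) * (real n + 1) = q n * (real n + 1/2)" .
    hence "q (Suc n) = q n * (real n + 1/2) / (real n + 1)" by (simp add: field_simps)
    thus ?case using Suc.IH by simp
  qed
  ultimately show ?thesis by simp
qed

lemma sc_abs_partial: "(\<Sum>k<n. \<bar>sc k\<bar>) \<le> 2"
proof (cases n)
  case 0 then show ?thesis by simp
next
  case (Suc m)
  have "(\<Sum>k\<le>m. \<bar>sc k\<bar>) = (\<Sum>k\<le>m. (if k = 0 then 2 else 0) - sc k)"
    by (rule sum.cong) (auto simp: sc_neg abs_of_neg)
  also have "\<dots> = 2 - (\<Sum>k\<le>m. sc k)" by (simp add: sum_subtractf sum.delta)
  finally show ?thesis using Suc sc_partial[of m] by (simp add: lessThan_Suc_atMost)
qed

lemma sc_abs_summable: "summable (\<lambda>k. \<bar>sc k\<bar>)"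
  by (rule summableI_nonneg_bounded[of _ 2]) (auto intro: sc_abs_partial)

lemma sc_summable: "summable sc"
  using sc_abs_summable summable_rabs_cancel by blast

lemma sc_suminf_nonneg: "0 \<le> suminf sc"
proof -
  have "(\<lambda>n. \<Sum>k\<le>n. sc k) \<longlonglongrightarrow> suminf sc" by (rule summable_LIMSEQ'[OF sc_summable])
  thus ?thesis by (rule LIMSEQ_le_const) (use sc_partial less_imp_le in blast)
qed

lemma sc_conv: "(\<Sum>k\<le>n. sc k * sc (n - k)) = (if n = 0 then 1 else if n = 1 then -1 else 0)"
proof -
  have "(\<Sum>k\<le>n. sc k * sc (n - k)) = (\<Sum>k=0..n. (-1)^n * (((1/2::real) gchoose k) * ((1/2) gchoose (n - k))))"
    unfolding atLeast0AtMost[symmetric]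
  proof (rule sum.cong)
    fix k assume "k \<in> {0..n}"
    hence "(-1::real)^k * (-1)^(n-k) = (-1)^n" by (simp add: power_add[symmetric])
    thus "sc k * sc (n - k) = (-1)^n * (((1/2::real) gchoose k) * ((1/2) gchoose (n - k)))"
      unfolding sc_def by (metis (no_types, lifting) mult.assoc mult.left_commute)
  qed simp
  also have "\<dots> = (-1)^n * ((1/2 + 1/2::real) gchoose n)"
    by (simp add: sum_distrib_left[symmetric] gbinomial_Vandermonde)
  also have "(1/2 + 1/2::real) = of_nat 1" by simp
  also have "(of_nat 1 gchoose n) = (of_nat (1 choose n) :: real)" by (rule binomial_gbinomial[symmetric])
  finally have E: "(\<Sum>k\<le>n. sc k * sc (n - k)) = (-1)^n * real (1 choose n)" by simp
  show ?thesis
  proof (cases "n \<le> 1")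
    case True
    then consider "n = 0" | "n = 1" by linarith
    then show ?thesis using E by cases auto
  next
    case False
    then show ?thesis using E by (simp add: binomial_eq_0)
  qed
qed

lemma prod_abs_summable:
  fixes a :: "nat \<Rightarrow> real"
  assumes sa: "summable (\<lambda>k. \<bar>a k\<bar>)" and C: "0 \<le> C"
  shows "(\<lambda>(k,j). \<bar>a k\<bar> * \<bar>a j\<bar> * C) summable_on (UNIV :: (nat \<times> nat) set)"
proof (rule nonneg_bdd_above_summable_on)
  show "\<And>x. x \<in> UNIV \<Longrightarrow> 0 \<le> (case x of (k, j) \<Rightarrow> \<bar>a k\<bar> * \<bar>a j\<bar> * C)"
    using C by auto
  let ?s = "suminf (\<lambda>k. \<bar>a k\<bar>)"
  have ps: "(\<Sum>k\<le>N. \<bar>a k\<bar>) \<le> ?s" for N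
    by (rule sum_le_suminf[OF sa]) auto
  show "bdd_above (sum (\<lambda>(k,j). \<bar>a k\<bar> * \<bar>a j\<bar> * C) ` {F. F \<subseteq> UNIV \<and> finite F})"
  proof (rule bdd_aboveI2)
    fix F :: "(nat \<times> nat) set" assume "F \<in> {F. F \<subseteq> UNIV \<and> finite F}"
    hence fF: "finite F" by simp
    define N where "N = Max (fst ` F \<union> snd ` F \<union> {0})"
    have FN: "F \<subseteq> {..N} \<times> {..N}"
    proof
      fix p assume "p \<in> F"
      hence "fst p \<le> N" "snd p \<le> N" unfolding N_def using fF by (auto intro!: Max_ge)
      thus "p \<in> {..N} \<times> {..N}" by (cases p) auto
    qed
    have "sum (\<lambda>(k,j). \<bar>a k\<bar> * \<bar>a j\<bar> * C) F \<le> sum (\<lambda>(k,j). \<bar>a k\<bar> * \<bar>a j\<bar> * C) ({..N} \<times> {..N})"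
      by (rule sum_mono2[OF _ FN]) (use C in auto)
    also have "\<dots> = (\<Sum>k\<le>N. \<Sum>j\<le>N. \<bar>a k\<bar> * \<bar>a j\<bar> * C)"
      by (simp add: sum.cartesian_product)
    also have "\<dots> = (\<Sum>k\<le>N. \<bar>a k\<bar>) * (\<Sum>j\<le>N. \<bar>a j\<bar>) * C"
      by (simp add: sum_distrib_left sum_distrib_right mult.assoc mult.left_commute)
    also have "\<dots> \<le> ?s * ?s * C"
      using ps[of N] C suminf_nonneg[OF sa] by (intro mult_right_mono mult_mono) (auto intro: sum_nonneg)
    finally show "sum (\<lambda>(k,j). \<bar>a k\<bar> * \<bar>a j\<bar> * C) F \<le> ?s * ?s * C" .
  qed
qed

lemma series_infsum:
  fixes f :: "nat \<Rightarrow> real"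
  assumes "summable (\<lambda>n. \<bar>f n\<bar>)"
  shows "infsum f UNIV = suminf f"
proof -
  have sf: "summable f" using assms summable_rabs_cancel by blast
  have "(f has_sum suminf f) UNIV"
    by (rule norm_summable_imp_has_sum) (use assms sf in auto)
  thus ?thesis by (rule infsumI)
qed

lemma dcauchy:
  fixes a m :: "nat \<Rightarrow> real"
  assumes sa: "summable (\<lambda>k. \<bar>a k\<bar>)" and mb: "\<And>n. \<bar>m n\<bar> \<le> C"
  shows "(\<Sum>k. a k * (\<Sum>j. a j * m (j+k))) = infsum (\<lambda>n. (\<Sum>i\<le>n. a i * a (n-i)) * m n) UNIV"
proof -
  have C: "0 \<le> C" using mb[of 0] by linarith
  define g where "g = (\<lambda>(k,j). a k * a j * m (j+k))"
  define h where "h = (\<lambda>(n,i). a i * a (n-i) * m n)"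
  let ?s = "suminf (\<lambda>k. \<bar>a k\<bar>)"
  have gn: "norm (g p) \<le> (\<lambda>(k,j). \<bar>a k\<bar> * \<bar>a j\<bar> * C) p" for p
  proof (cases p)
    case (Pair k j)
    have "\<bar>a k * a j * m (j+k)\<bar> = \<bar>a k\<bar> * \<bar>a j\<bar> * \<bar>m (j+k)\<bar>" by (simp add: abs_mult)
    also have "\<dots> \<le> \<bar>a k\<bar> * \<bar>a j\<bar> * C" by (rule mult_left_mono[OF mb]) simp
    finally show ?thesis by (simp add: g_def Pair)
  qed
  have gsn: "(\<lambda>p. norm (g p)) summable_on UNIV"
    by (rule summable_on_comparison_test[OF prod_abs_summable[OF sa C]]) (use gn in auto)
  have gs: "g summable_on UNIV" by (rule abs_summable_summable[OF gsn])
  have inner: "infsum (\<lambda>j. g (k,j)) UNIV = a k * (\<Sum>j. a j * m (j+k))" for k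
  proof -
    have s1: "summable (\<lambda>j. \<bar>a j * m (j+k)\<bar>)"
      by (rule summable_comparison_test'[of "\<lambda>j. \<bar>a j\<bar> * C"])
         (auto simp: abs_mult intro: summable_mult2 sa mult_left_mono mb)
    have "summable (\<lambda>j. \<bar>a k * (a j * m (j+k))\<bar>)"
      using summable_mult[OF s1, of "\<bar>a k\<bar>"] by (simp add: abs_mult)
    hence "infsum (\<lambda>j. a k * (a j * m (j+k))) UNIV = (\<Sum>j. a k * (a j * m (j+k)))"
      by (rule series_infsum)
    also have "\<dots> = a k * (\<Sum>j. a j * m (j+k))"
      by (rule suminf_mult[OF summable_rabs_cancel[OF s1]])
    finally show ?thesis by (simp add: g_def mult.assoc)
  qed
  have outer: "infsum (\<lambda>k. a k * (\<Sum>j. a j * m (j+k))) UNIV = (\<Sum>k. a k * (\<Sum>j. a j * m (j+k)))"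
  proof (rule series_infsum)
    have b: "\<bar>(\<Sum>j. a j * m (j+k))\<bar> \<le> ?s * C" for k
    proof -
      have s1: "summable (\<lambda>j. \<bar>a j * m (j+k)\<bar>)"
        by (rule summable_comparison_test'[of "\<lambda>j. \<bar>a j\<bar> * C"])
           (auto simp: abs_mult intro: summable_mult2 sa mult_left_mono mb)
      have "\<bar>(\<Sum>j. a j * m (j+k))\<bar> \<le> (\<Sum>j. \<bar>a j * m (j+k)\<bar>)"
        using summable_norm[OF s1[unfolded real_norm_def[symmetric]]] by simp
      also have "\<dots> \<le> (\<Sum>j. \<bar>a j\<bar> * C)"
        by (rule suminf_le[OF _ s1 summable_mult2[OF sa]]) (auto simp: abs_mult intro: mult_left_mono mb)
      also have "\<dots> = ?s * C" by (rule suminf_mult2[OF sa, symmetric])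
      finally show ?thesis .
    qed
    show "summable (\<lambda>k. \<bar>a k * (\<Sum>j. a j * m (j+k))\<bar>)"
      by (rule summable_comparison_test'[of "\<lambda>k. \<bar>a k\<bar> * (?s * C)"])
         (auto simp: abs_mult intro: summable_mult2 sa mult_left_mono b)
  qed
  have "infsum g UNIV = infsum (\<lambda>k. infsum (\<lambda>j. g (k,j)) UNIV) UNIV"
    using infsum_Sigma_banach[of g UNIV "\<lambda>_. UNIV"] gs by simp
  hence g_eq: "infsum g UNIV = (\<Sum>k. a k * (\<Sum>j. a j * m (j+k)))"
    using inner outer by simp
  let ?T = "Sigma UNIV (\<lambda>n. {..n})"
  have re: "infsum g UNIV = infsum h ?T"
    by (rule infsum_reindex_bij_witness[of UNIV "\<lambda>(n,i). (i, n-i)" "\<lambda>(k,j). (k+j, k)"])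
       (auto simp: g_def h_def add.commute)
  have hs: "h summable_on ?T"
    using gs summable_on_reindex_bij_witness[of UNIV "\<lambda>(n,i). (i, n-i)" "\<lambda>(k,j). (k+j, k)" ?T h g]
    by (auto simp: g_def h_def add.commute)
  have "infsum h ?T = infsum (\<lambda>n. infsum (\<lambda>i. h (n,i)) {..n}) UNIV"
    using infsum_Sigma_banach[of h UNIV "\<lambda>n. {..n}"] hs by simp
  also have "\<dots> = infsum (\<lambda>n. (\<Sum>i\<le>n. a i * a (n-i)) * m n) UNIV"
    by (simp add: h_def sum_distrib_right)
  finally show ?thesis using g_eq re by simp
qed

locale sqset =
  fixes T :: "'h::{real_inner,complete_space} \<Rightarrow> 'h"
  assumes bl: "bounded_linear T"
    and sa: "\<And>x y. T x \<bullet> y = x \<bullet> T y"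
    and nb: "\<And>x. norm (T x) \<le> norm x"
begin

lemma blp: "bounded_linear (T^^k)"
proof (induction k)
  case 0 then show ?case by (simp add: id_def bounded_linear_ident)
next
  case (Suc k) then show ?case by (simp add: bounded_linear_compose[OF bl] comp_def)
qed

lemma nbp: "norm ((T^^k) x) \<le> norm x"
  by (induction k) (auto intro: order_trans[OF nb])

lemma sap: "(T^^k) x \<bullet> y = x \<bullet> (T^^k) y"
  by (induction k arbitrary: x y) (auto simp: sa funpow_swap1)

lemma formle: "(T^^k) x \<bullet> x \<le> norm x ^ 2"
proof -
  have "(T^^k) x \<bullet> x \<le> norm ((T^^k) x) * norm x" by (rule norm_cauchy_schwarz)
  also have "\<dots> \<le> norm x * norm x" by (rule mult_right_mono[OF nbp]) simp
  finally show ?thesis by (simp add: power2_eq_square)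
qed

definition S0 :: "'h \<Rightarrow> 'h" where "S0 x = (\<Sum>k. sc k *\<^sub>R (T^^k) x)"

lemma termb: "norm (sc k *\<^sub>R (T^^k) x) \<le> \<bar>sc k\<bar> * norm x"
  by (simp add: mult_left_mono nbp)

lemma sumS: "summable (\<lambda>k. sc k *\<^sub>R (T^^k) x)" "summable (\<lambda>k. norm (sc k *\<^sub>R (T^^k) x))"
  using summable_comparison_cs[OF termb summable_mult2[OF sc_abs_summable]] by auto

lemma S0_inner: "S0 x \<bullet> y = (\<Sum>k. sc k * ((T^^k) x \<bullet> y))"
proof -
  have "(\<lambda>v. v \<bullet> y) (\<Sum>k. sc k *\<^sub>R (T^^k) x) = (\<Sum>k. (\<lambda>v. v \<bullet> y) (sc k *\<^sub>R (T^^k) x))"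
    by (rule bounded_linear.suminf[OF bounded_linear_inner_left sumS(1)])
  thus ?thesis unfolding S0_def by simp
qed

lemma S0_add: "S0 (x + y) = S0 x + S0 y"
proof -
  have "S0 x + S0 y = (\<Sum>k. sc k *\<^sub>R (T^^k) x + sc k *\<^sub>R (T^^k) y)"
    unfolding S0_def by (rule suminf_add[OF sumS(1) sumS(1)])
  also have "\<dots> = S0 (x + y)" unfolding S0_def
    by (simp add: linear_add[OF bounded_linear.linear[OF blp]] scaleR_add_right)
  finally show ?thesis by simp
qed

lemma S0_scale: "S0 (c *\<^sub>R x) = c *\<^sub>R S0 x"
proof -
  have "c *\<^sub>R S0 x = (\<Sum>k. c *\<^sub>R (sc k *\<^sub>R (T^^k) x))"
    unfolding S0_def by (rule suminf_scaleR_right[OF sumS(1)])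
  also have "\<dots> = S0 (c *\<^sub>R x)" unfolding S0_def
    by (simp add: linear_scale[OF bounded_linear.linear[OF blp]] algebra_simps)
  finally show ?thesis by simp
qed

lemma S0_bound: "norm (S0 x) \<le> norm x * suminf (\<lambda>k. \<bar>sc k\<bar>)"
proof -
  have "norm (S0 x) \<le> (\<Sum>k. norm (sc k *\<^sub>R (T^^k) x))"
    unfolding S0_def by (rule summable_norm_cs[OF sumS(2)])
  also have "\<dots> \<le> (\<Sum>k. \<bar>sc k\<bar> * norm x)"
    by (rule suminf_le[OF termb sumS(2) summable_mult2[OF sc_abs_summable]])
  also have "\<dots> = suminf (\<lambda>k. \<bar>sc k\<bar>) * norm x"
    by (rule suminf_mult2[symmetric, OF sc_abs_summable])
  also have "\<dots> = norm x * suminf (\<lambda>k. \<bar>sc k\<bar>)" by simp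
  finally show ?thesis .
qed

lemma S0_bl: "bounded_linear S0"
  by (rule bounded_linear_intro[of _ "suminf (\<lambda>k. \<bar>sc k\<bar>)"]) (auto simp: S0_add S0_scale S0_bound)

lemma S0_sa: "S0 x \<bullet> y = x \<bullet> S0 y"
proof -
  have tw: "(T^^k) x \<bullet> y = (T^^k) y \<bullet> x" for k
    by (metis sap inner_commute)
  have "S0 x \<bullet> y = (\<Sum>k. sc k * ((T^^k) y \<bullet> x))"
    unfolding S0_inner by (simp only: tw)
  also have "\<dots> = S0 y \<bullet> x" by (simp add: S0_inner)
  finally show ?thesis by (simp add: inner_commute)
qed

lemma S0_nonneg: "0 \<le> S0 x \<bullet> x"
proof -
  have ab: "summable (\<lambda>k. sc k * c)" for c
    by (rule summable_mult2[OF sc_summable])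
  have s1: "summable (\<lambda>k. sc k * ((T^^k) x \<bullet> x))"
  proof -
    have b: "norm (sc k * ((T^^k) x \<bullet> x)) \<le> \<bar>sc k\<bar> * norm x ^ 2" for k
    proof -
      have "\<bar>(T^^k) x \<bullet> x\<bar> \<le> norm ((T^^k) x) * norm x" by (rule Cauchy_Schwarz_ineq2)
      also have "\<dots> \<le> norm x ^ 2" using mult_right_mono[OF nbp[of k x]] by (simp add: power2_eq_square)
      finally show ?thesis by (simp add: abs_mult mult_left_mono)
    qed
    show ?thesis
      by (rule summable_comparison_test'[OF summable_mult2[OF sc_abs_summable] b])
  qed
  have "(\<Sum>k. sc k * norm x ^ 2) \<le> (\<Sum>k. sc k * ((T^^k) x \<bullet> x))"
  proof (rule suminf_le[OF _ ab s1])
    fix k show "sc k * norm x ^ 2 \<le> sc k * ((T^^k) x \<bullet> x)"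
    proof (cases "k = 0")
      case True then show ?thesis by (simp add: power2_norm_eq_inner)
    next
      case False
      hence "sc k < 0" using sc_neg by simp
      thus ?thesis using formle[of k x] by (simp add: mult_left_mono_neg)
    qed
  qed
  moreover have "(\<Sum>k. sc k * norm x ^ 2) = suminf sc * norm x ^ 2"
    by (rule suminf_mult2[OF sc_summable, symmetric])
  moreover have "0 \<le> suminf sc * norm x ^ 2" using sc_suminf_nonneg by simp
  ultimately show ?thesis by (simp add: S0_inner)
qed

lemma S0_square: "S0 (S0 x) = x - T x"
proof (rule inner_eq_vec)
  fix z
  define m where "m n = (T^^n) x \<bullet> z" for n
  have mb: "\<bar>m n\<bar> \<le> norm x * norm z" for n
  proof -
    have "\<bar>m n\<bar> \<le> norm ((T^^n) x) * norm z" unfolding m_def by (rule Cauchy_Schwarz_ineq2)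
    also have "\<dots> \<le> norm x * norm z" by (rule mult_right_mono[OF nbp]) simp
    finally show ?thesis .
  qed
  have "S0 (S0 x) \<bullet> z = S0 x \<bullet> S0 z" by (rule S0_sa)
  also have "\<dots> = (\<Sum>k. sc k * ((T^^k) x \<bullet> S0 z))" by (rule S0_inner)
  also have "\<dots> = (\<Sum>k. sc k * (\<Sum>j. sc j * m (j+k)))"
  proof -
    have "(T^^k) x \<bullet> S0 z = (\<Sum>j. sc j * m (j+k))" for k
    proof -
      have "(T^^k) x \<bullet> S0 z = S0 ((T^^k) x) \<bullet> z" by (simp add: S0_sa)
      also have "\<dots> = (\<Sum>j. sc j * ((T^^j) ((T^^k) x) \<bullet> z))" by (rule S0_inner)
      also have "\<dots> = (\<Sum>j. sc j * m (j+k))" by (simp add: m_def funpow_add)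
      finally show ?thesis .
    qed
    thus ?thesis by simp
  qed
  also have "\<dots> = infsum (\<lambda>n. (\<Sum>i\<le>n. sc i * sc (n-i)) * m n) UNIV"
    by (rule dcauchy[OF sc_abs_summable mb])
  also have "\<dots> = m 0 - m 1"
  proof (rule infsumI)
    have "((\<lambda>n. (\<Sum>i\<le>n. sc i * sc (n-i)) * m n) has_sum (\<Sum>n\<in>{0,1}. (\<Sum>i\<le>n. sc i * sc (n-i)) * m n)) UNIV"
      by (rule has_sum_finite_neutralI[of "{0,1}"]) (auto simp: sc_conv)
    thus "((\<lambda>n. (\<Sum>i\<le>n. sc i * sc (n-i)) * m n) has_sum (m 0 - m 1)) UNIV"
      using sc_conv[of 0] sc_conv[of 1] by simp
  qed
  also have "\<dots> = (x - T x) \<bullet> z" by (simp add: m_def inner_diff_left)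
  finally show "z \<bullet> S0 (S0 x) = z \<bullet> (x - T x)" by (simp add: inner_commute)
qed

lemma S0_comm:
  assumes "bounded_linear R" "\<And>x. R (T x) = T (R x)"
  shows "R (S0 x) = S0 (R x)"
proof -
  have c: "R ((T^^k) x) = (T^^k) (R x)" for k
    by (induction k) (auto simp: assms(2))
  have "R (S0 x) = (\<Sum>k. R (sc k *\<^sub>R (T^^k) x))"
    unfolding S0_def by (rule bounded_linear.suminf[OF assms(1) sumS(1)])
  also have "\<dots> = S0 (R x)" unfolding S0_def
    by (simp add: linear_scale[OF bounded_linear.linear[OF assms(1)]] c)
  finally show ?thesis .
qed

end

lemma zero_form:
  fixes Q :: "'a::real_inner \<Rightarrow> 'a"
  assumes lin: "linear Q" and sa: "\<And>a b. Q a \<bullet> b = a \<bullet> Q b" and pos: "\<And>a. 0 \<le> Q a \<bullet> a"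
    and z: "Q v \<bullet> v = 0"
  shows "Q v = 0"
proof -
  let ?u = "Q v"
  have "Q v \<bullet> ?u = 0"
  proof (rule quad_zero[where q = "Q ?u \<bullet> ?u"])
    fix t :: real
    have "0 \<le> Q (v - t *\<^sub>R ?u) \<bullet> (v - t *\<^sub>R ?u)" by (rule pos)
    also have "Q (v - t *\<^sub>R ?u) = Q v - t *\<^sub>R Q ?u"
      by (simp add: linear_diff[OF lin] linear_scale[OF lin])
    also have "(Q v - t *\<^sub>R Q ?u) \<bullet> (v - t *\<^sub>R ?u)
        = Q v \<bullet> v - t * (Q v \<bullet> ?u) - t * (Q ?u \<bullet> v) + t * t * (Q ?u \<bullet> ?u)"
      by (simp add: inner_diff_left inner_diff_right algebra_simps)
    also have "Q ?u \<bullet> v = Q v \<bullet> ?u" by (simp add: sa inner_commute)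
    finally show "0 \<le> t * t * (Q ?u \<bullet> ?u) - 2 * t * (Q v \<bullet> ?u)" using z by simp
  qed (rule pos)
  thus ?thesis by simp
qed

context sqset
begin

lemma S0_nonneg_op: "nonneg_op S0"
  unfolding nonneg_op_def
  using S0_nonneg by (auto intro!: S0_bl adjoint_unique simp: S0_sa)

lemma sqrt_unique:
  assumes R: "nonneg_op R" and RR: "R \<circ> R = (\<lambda>x. x - T x)"
  shows "R = S0"
proof
  fix x
  have bR: "bounded_linear R" and aR: "adjoint R = R" and pR: "\<And>a. 0 \<le> R a \<bullet> a"
    using R unfolding nonneg_op_def by auto
  have lR: "linear R" using bR bounded_linear.linear by blast
  have lS: "linear S0" using S0_bl bounded_linear.linear by blast
  have sR: "R a \<bullet> b = a \<bullet> R b" for a b using adjoint_works_h[OF bR, of a b] aR by simp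
  have RR': "R (R a) = a - T a" for a using fun_cong[OF RR, of a] by simp
  have Tc: "R (T a) = T (R a)" for a
  proof -
    have "T a = a - R (R a)" using RR'[of a] by simp
    hence "R (T a) = R a - R (R (R a))" by (simp add: linear_diff[OF lR])
    also have "\<dots> = T (R a)" using RR'[of "R a"] by simp
    finally show ?thesis .
  qed
  have com: "R (S0 a) = S0 (R a)" for a by (rule S0_comm[OF bR Tc])
  define v where "v = R x - S0 x"
  have "R v + S0 v = R (R x) - S0 (S0 x)"
    unfolding v_def by (simp add: linear_diff[OF lR] linear_diff[OF lS] com)
  also have "\<dots> = 0" by (simp add: RR' S0_square)
  finally have "R v \<bullet> v + S0 v \<bullet> v = 0" by (metis inner_add_left inner_zero_left)
  moreover have "0 \<le> R v \<bullet> v" "0 \<le> S0 v \<bullet> v" using pR S0_nonneg by auto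
  ultimately have z1: "R v \<bullet> v = 0" and z2: "S0 v \<bullet> v = 0" by linarith+
  have Rv: "R v = 0" by (rule zero_form[OF lR sR pR z1])
  have Sv: "S0 v = 0" by (rule zero_form[OF lS S0_sa S0_nonneg z2])
  have "v \<bullet> v = R x \<bullet> v - S0 x \<bullet> v" unfolding v_def by (simp add: inner_diff_left)
  also have "\<dots> = x \<bullet> R v - x \<bullet> S0 v" by (simp add: sR S0_sa)
  also have "\<dots> = 0" by (simp add: Rv Sv)
  finally have "v = 0" by simp
  thus "R x = S0 x" unfolding v_def by simp
qed

lemma op_sqrt_props:
  "nonneg_op (op_sqrt (\<lambda>x. x - T x)) \<and> op_sqrt (\<lambda>x. x - T x) \<circ> op_sqrt (\<lambda>x. x - T x) = (\<lambda>x. x - T x)"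
proof -
  have ex: "\<exists>!S. nonneg_op S \<and> S \<circ> S = (\<lambda>x. x - T x)"
  proof (rule ex1I[of _ S0])
    show "nonneg_op S0 \<and> S0 \<circ> S0 = (\<lambda>x. x - T x)"
      using S0_nonneg_op by (auto simp: S0_square)
  next
    fix R assume "nonneg_op R \<and> R \<circ> R = (\<lambda>x. x - T x)"
    thus "R = S0" using sqrt_unique by blast
  qed
  show ?thesis unfolding op_sqrt_def by (rule theI'[OF ex])
qed

end

lemma funpow_adj:
  fixes F G :: "'a::real_inner \<Rightarrow> 'a"
  assumes "\<And>a b. F a \<bullet> b = a \<bullet> G b"
  shows "(F^^n) a \<bullet> b = a \<bullet> (G^^n) b"
proof (induction n arbitrary: a b)
  case 0 then show ?case by simp
next
  case (Suc n)
  have "(F^^Suc n) a \<bullet> b = (F^^n) (F a) \<bullet> b" by (simp add: funpow_swap1)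
  also have "\<dots> = F a \<bullet> (G^^n) b" by (rule Suc.IH)
  also have "\<dots> = a \<bullet> G ((G^^n) b)" by (rule assms)
  also have "\<dots> = a \<bullet> (G^^Suc n) b" by simp
  finally show ?case .
qed

lemma perp_gen_char:
  fixes D F G :: "'h::real_inner \<Rightarrow> 'h"
  assumes adj: "\<And>a b. F a \<bullet> b = a \<bullet> G b" and Dsa: "\<And>a b. D a \<bullet> b = a \<bullet> D b"
    and RM: "range D \<subseteq> M"
  shows "(\<forall>g\<in>(\<Union>n. (F^^n) ` (D ` M)). g \<bullet> y = 0) \<longleftrightarrow> (\<forall>n. D ((G^^n) y) = 0)"
proof
  assume H: "\<forall>g\<in>(\<Union>n. (F^^n) ` (D ` M)). g \<bullet> y = 0"
  show "\<forall>n. D ((G^^n) y) = 0"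
  proof
    fix n
    let ?u = "D ((G^^n) y)"
    have "?u \<in> M" using RM by blast
    hence "(F^^n) (D ?u) \<bullet> y = 0" using H by blast
    hence "?u \<bullet> ?u = 0" by (simp add: funpow_adj[OF adj] Dsa)
    thus "?u = 0" by simp
  qed
next
  assume H: "\<forall>n. D ((G^^n) y) = 0"
  show "\<forall>g\<in>(\<Union>n. (F^^n) ` (D ` M)). g \<bullet> y = 0"
    using H by (auto simp: funpow_adj[OF adj] Dsa)
qed

lemma subspace_sum_self:
  fixes H :: "'a::real_normed_vector set"
  assumes "subspace H"
  shows "{x + y | x y. x \<in> H \<and> y \<in> H} = H"
proof
  show "{x + y | x y. x \<in> H \<and> y \<in> H} \<subseteq> H" using assms subspace_add by blast
  show "H \<subseteq> {x + y | x y. x \<in> H \<and> y \<in> H}"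
  proof
    fix x assume "x \<in> H"
    moreover have "0 \<in> H" using assms subspace_0 by blast
    ultimately show "x \<in> {x + y | x y. x \<in> H \<and> y \<in> H}" by force
  qed
qed

theorem proposition2p3:
  fixes A :: "'h::{real_inner,complete_space} \<Rightarrow> 'h"
  assumes "contraction_op A" and "normal_op A"
  defines "B \<equiv> defect_op (adjoint A)" and "M \<equiv> defect_space (adjoint A)"
      and "C \<equiv> defect_op A" and "N \<equiv> defect_space A"
  shows "controllable_subspace A B M = observable_subspace A C N
         \<and> (sys_simple A B M C N \<longleftrightarrow> sys_controllable A B M)
         \<and> (sys_controllable A B M \<longleftrightarrow> sys_observable A C N)
         \<and> (sys_observable A C N \<longleftrightarrow> sys_minimal A B M C N)"
proof -
  have bA: "bounded_linear A" and nA: "\<And>x. norm (A x) \<le> norm x"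
    using assms(1) unfolding contraction_op_def by auto
  define As where "As = adjoint A"
  have nor: "As (A x) = A (As x)" for x
    using assms(2) unfolding normal_op_def As_def by (metis comp_apply)
  have wk: "A a \<bullet> b = a \<bullet> As b" for a b unfolding As_def by (rule adjoint_works_h[OF bA])
  have wk': "As a \<bullet> b = a \<bullet> A b" for a b by (metis wk inner_commute)
  have bAs: "bounded_linear As" unfolding As_def by (rule adjoint_bl_h[OF bA])
  have aAs: "adjoint As = A" unfolding As_def by (rule adjoint_adjoint_h[OF bA])
  have nAs: "norm (As y) \<le> norm y" for y
  proof (cases "As y = 0")
    case True thus ?thesis by simp
  next
    case False
    have "norm (As y)^2 = A (As y) \<bullet> y" by (simp add: wk power2_norm_eq_inner)
    also have "\<dots> \<le> norm (A (As y)) * norm y" by (rule norm_cauchy_schwarz)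
    also have "\<dots> \<le> norm (As y) * norm y" by (rule mult_right_mono[OF nA]) simp
    finally have "norm (As y) * norm (As y) \<le> norm (As y) * norm y" by (simp add: power2_eq_square)
    thus ?thesis using False by simp
  qed
  define T where "T x = As (A x)" for x
  have i1: "bounded_linear T" unfolding T_def
    using bounded_linear_compose[OF bAs bA] by (simp add: comp_def)
  have i2: "T x \<bullet> y = x \<bullet> T y" for x y unfolding T_def
    by (metis wk inner_commute)
  have i3: "norm (T x) \<le> norm x" for x unfolding T_def using nAs[of "A x"] nA[of x] by linarith
  interpret sqset T by (rule sqset.intro[OF i1 i2 i3])
  define D where "D = defect_op A"
  have Ddef: "D = op_sqrt (\<lambda>x. x - T x)" unfolding D_def defect_op_def T_def As_def by simp
  have Dprops: "nonneg_op D" "D \<circ> D = (\<lambda>x. x - T x)" using op_sqrt_props unfolding Ddef by auto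
  have bD: "bounded_linear D" and aD: "adjoint D = D" and pD: "\<And>a. 0 \<le> D a \<bullet> a"
    using Dprops(1) unfolding nonneg_op_def by auto
  have Dsa: "D a \<bullet> b = a \<bullet> D b" for a b using adjoint_works_h[OF bD, of a b] aD by simp
  have DD: "D (D a) = a - As (A a)" for a using fun_cong[OF Dprops(2), of a] by (simp add: T_def)
  have BD: "B = D"
  proof -
    have "(\<lambda>x. x - adjoint As (As x)) = (\<lambda>x. x - As (A x))" by (simp add: aAs nor)
    thus ?thesis unfolding B_def D_def defect_op_def As_def by simp
  qed
  have CD: "C = D" unfolding C_def D_def ..
  define R where "R = closure (range D)"
  have MR: "M = R" unfolding M_def R_def defect_space_def BD[symmetric] B_def As_def ..
  have NR: "N = R" unfolding N_def R_def defect_space_def D_def ..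
  have RR: "range D \<subseteq> R" unfolding R_def by (rule closure_subset)
  have Dker: "D z = 0 \<longleftrightarrow> norm (A z) = norm z" for z
  proof -
    have "norm (D z)^2 = D (D z) \<bullet> z" by (simp add: Dsa power2_norm_eq_inner)
    also have "\<dots> = norm z ^2 - norm (A z)^2"
      using wk'[of "A z" z] by (simp add: DD inner_diff_left power2_norm_eq_inner)
    finally have "norm (D z)^2 = norm z ^2 - norm (A z)^2" .
    hence "D z = 0 \<longleftrightarrow> norm (A z)^2 = norm z^2" by auto
    also have "\<dots> \<longleftrightarrow> norm (A z) = norm z" by (simp add: power2_eq_iff_nonneg)
    finally show ?thesis .
  qed
  have nAAs: "norm (A z) = norm (As z)" for z
  proof -
    have "norm (A z)^2 = As (A z) \<bullet> z" using wk'[of "A z" z] by (simp add: power2_norm_eq_inner)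
    also have "\<dots> = A (As z) \<bullet> z" by (simp add: nor)
    also have "\<dots> = norm (As z)^2" by (simp add: wk power2_norm_eq_inner)
    finally show ?thesis by (simp add: power2_eq_iff_nonneg)
  qed
  have c1: "As ((A^^n) x) = (A^^n) (As x)" for n x
    by (induction n) (auto simp: nor)
  have c2: "(As^^m) ((A^^n) x) = (A^^n) ((As^^m) x)" for m n x
    by (induction m) (auto simp: c1)
  have fg: "norm ((A^^n) y) = norm ((As^^n) y)" for n y
  proof -
    have "norm ((A^^n) y)^2 = y \<bullet> (As^^n) ((A^^n) y)"
      by (simp add: power2_norm_eq_inner funpow_adj[OF wk])
    also have "\<dots> = y \<bullet> (A^^n) ((As^^n) y)" by (simp add: c2)
    also have "\<dots> = norm ((As^^n) y)^2"
      by (simp add: power2_norm_eq_inner funpow_adj[OF wk'] inner_commute)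
    finally show ?thesis by (simp add: power2_eq_iff_nonneg)
  qed
  have keyeq: "(\<forall>n. D ((As^^n) y) = 0) \<longleftrightarrow> (\<forall>n. D ((A^^n) y) = 0)" for y
  proof -
    have "(\<forall>n. D ((As^^n) y) = 0) \<longleftrightarrow> (\<forall>n. norm ((As^^Suc n) y) = norm ((As^^n) y))"
      by (simp add: Dker nAAs)
    also have "\<dots> \<longleftrightarrow> (\<forall>n. norm ((A^^Suc n) y) = norm ((A^^n) y))"
      by (simp only: fg)
    also have "\<dots> \<longleftrightarrow> (\<forall>n. D ((A^^n) y) = 0)" by (simp add: Dker)
    finally show ?thesis .
  qed
  let ?Gc = "\<Union>n. (A^^n) ` (D ` R)"
  let ?Go = "\<Union>n. (As^^n) ` (D ` R)"
  have Hc: "controllable_subspace A B M = closure (span ?Gc)"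
    unfolding controllable_subspace_def BD MR ..
  have Ho: "observable_subspace A C N = closure (span ?Go)"
    unfolding observable_subspace_def CD NR aD As_def ..
  have eq: "controllable_subspace A B M = observable_subspace A C N"
  proof -
    have "closure (span ?Gc) = closure (span ?Go)"
    proof (rule set_eqI)
      fix x
      have "(\<forall>g\<in>?Gc. g \<bullet> y = 0) \<longleftrightarrow> (\<forall>g\<in>?Go. g \<bullet> y = 0)" for y
        using perp_gen_char[OF wk Dsa RR, of y] perp_gen_char[OF wk' Dsa RR, of y] keyeq[of y]
        by simp
      thus "x \<in> closure (span ?Gc) \<longleftrightarrow> x \<in> closure (span ?Go)"
        by (simp add: closure_span_perp_char)
    qed
    thus ?thesis using Hc Ho by simp
  qed
  define H where "H = controllable_subspace A B M"
  have sH: "subspace H" unfolding H_def Hc by (intro subspace_closure_h subspace_span)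
  have cH: "closure H = H" unfolding H_def Hc by simp
  have simp_iff: "sys_simple A B M C N \<longleftrightarrow> sys_controllable A B M"
    unfolding sys_simple_def sys_controllable_def eq[symmetric] H_def[symmetric]
    using subspace_sum_self[OF sH] cH by simp
  show ?thesis
    using eq simp_iff unfolding sys_controllable_def sys_observable_def sys_minimal_def by simp
qed

end
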